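(* Let $\Sigma$ be an alphabet with $|\Sigma| \geq 3$ and let $n \geq 1$. If $g \colon \mathcal{T}(\Sigma)^n \to \mathcal{T}(\Sigma)$ is congruence preserving, then there exists a polynomial $P_g(x_1,\ldots,x_n)$ such that $g = \widetilde{P_g}$. In other words, the algebra $\langle \mathcal{T}(\Sigma), \star\rangle$ is affine complete.
   Context: Let $\Sigma$ be an alphabet not containing $0,1$. A binary tree over $\Sigma$ is a finite set $t \subseteq \{0,1\}^*\Sigma$ such that for any $ua, vb \in t$ with $ua \neq vb$, $u$ is not a prefix of $v$ and $v$ is not a prefix of $u$. $\mathcal{T}(\Sigma)$ denotes the set of all such trees. The empty tree is denoted $\mathbf{0}$, and each letter $a\in\Sigma$ is identified with the tree $\{a\}$. The binary operation is $t \star t' = 0.t \cup 1.t'$ (prefix every word of $t$ by $0$ and every word of $t'$ by $1$); in particular $\mathbf{0}\star\mathbf{0}=\mathbf{0}$. A congruence on $\langle \mathcal{T}(\Sigma),\star\rangle$ is an equivalence relation $\sim$ on $\mathcal{T}(\Sigma)$ such that $t_1\sim t_1'$ and $t_2 \sim t_2'$ imply $t_1\star t_2 \sim t_1'\star t_2'$. A function $f\colon \mathcal{T}(\Sigma)^n \to \mathcal{T}(\Sigma)$ is congruence preserving (CP) if for every congruence $\sim$ and all $t_1,\ldots,t_n,t_1',\ldots,t_n'$, $t_i\sim t_i'$ for all $i$ implies $f(t_1,\ldots,t_n)\sim f(t_1',\ldots,t_n')$. Let $x_1,\ldots,x_n \notin \Sigma$ be variables. A polynomial $P(x_1,\ldots,x_n)$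 is a tree over the alphabet $\Sigma\cup\{x_1,\ldots,x_n\}$. Its polynomial function $\widetilde P\colon \mathcal{T}(\Sigma)^n\to\mathcal{T}(\Sigma)$ is defined, for $\vec u=\langle t_1,\ldots,t_n\rangle$, by $\widetilde P(\vec u)=P$ if $P=\mathbf 0$ or $P\in\Sigma$; $\widetilde P(\vec u)=t_i$ if $P=x_i$; and $\widetilde P(\vec u)=\widetilde{P_1}(\vec u)\star\widetilde{P_2}(\vec u)$ if $P=P_1\star P_2$. *)

theory Defs
  imports Main "HOL-Library.Sublist"
begin

text \<open>A word of \<open>{0,1}*\<Sigma>\<close> is a pair (u, a) with u a bool list
  (False = 0, True = 1) and a a letter.  Trees are sets of such words.\<close>

type_synonym 'a tree = "(bool list \<times> 'a) set"

definition is_tree :: "'a tree \<Rightarrow> bool" where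
  "is_tree t \<longleftrightarrow> finite t \<and>
     (\<forall>(u, a) \<in> t. \<forall>(v, b) \<in> t. (u, a) \<noteq> (v, b) \<longrightarrow> \<not> prefix u v \<and> \<not> prefix v u)"

definition trees :: "'a tree set" where
  "trees = {t. is_tree t}"

definition star :: "'a tree \<Rightarrow> 'a tree \<Rightarrow> 'a tree" where
  "star t t' = (\<lambda>(u, a). (False # u, a)) ` t \<union> (\<lambda>(u, a). (True # u, a)) ` t'"

definition congruence :: "('a tree \<times> 'a tree) set \<Rightarrow> bool" where
  "congruence R \<longleftrightarrow> equiv trees R \<and>
     (\<forall>t1 t1' t2 t2'. (t1, t1') \<in> R \<longrightarrow> (t2, t2') \<in> R \<longrightarrow> (star t1 t2, star t1' t2') \<in> R)"

definition congruence_preserving :: "nat \<Rightarrow> ('a tree list \<Rightarrow> 'a tree) \<Rightarrow> bool" where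
  "congruence_preserving n f \<longleftrightarrow>
     (\<forall>R. congruence R \<longrightarrow>
        (\<forall>ts ts'. length ts = n \<and> length ts' = n \<and> set ts \<subseteq> trees \<and> set ts' \<subseteq> trees \<and>
           list_all2 (\<lambda>t t'. (t, t') \<in> R) ts ts' \<longrightarrow> (f ts, f ts') \<in> R))"

text \<open>Polynomials: trees over \<open>\<Sigma> \<union> {x_1,...,x_n}\<close>; letter \<open>Inl a\<close> is \<open>a \<in> \<Sigma>\<close>,
  letter \<open>Inr i\<close> is the variable \<open>x_(i+1)\<close>.\<close>

definition is_poly :: "nat \<Rightarrow> ('a + nat) tree \<Rightarrow> bool" where
  "is_poly n P \<longleftrightarrow> is_tree P \<and> (\<forall>(u, c) \<in> P. \<forall>i. c = Inr i \<longrightarrow> i < n)"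

inductive poly_eval :: "'a tree list \<Rightarrow> ('a + nat) tree \<Rightarrow> 'a tree \<Rightarrow> bool" for ts where
  pe_zero: "poly_eval ts {} {}"
| pe_letter: "poly_eval ts {([], Inl a)} {([], a)}"
| pe_var: "poly_eval ts {([], Inr i)} (ts ! i)"
| pe_star: "poly_eval ts P1 r1 \<Longrightarrow> poly_eval ts P2 r2 \<Longrightarrow>
              poly_eval ts (star P1 P2) (star r1 r2)"

definition poly_fun :: "('a + nat) tree \<Rightarrow> 'a tree list \<Rightarrow> 'a tree" where
  "poly_fun P ts = (THE r. poly_eval ts P r)"

end

theory Submission
  imports Defs
begin

definition leaf :: "'a \<Rightarrow> 'a tree" where "leaf m = {([], m)}"
definition ren :: "('a \<Rightarrow> 'a) \<Rightarrow> 'a tree \<Rightarrow> 'a tree" where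
  "ren \<rho> r = (\<lambda>(u,m). (u, \<rho> m)) ` r"
definition tsub :: "'a \<Rightarrow> 'a tree \<Rightarrow> 'a tree \<Rightarrow> 'a tree" where
  "tsub l Y r = {(u,m). (u,m) \<in> r \<and> m \<noteq> l} \<union> {(v@y,m) | v y m. (v,l) \<in> r \<and> (y,m) \<in> Y}"
definition fixY :: "'a \<Rightarrow> 'a tree \<Rightarrow> 'a tree" where
  "fixY l t = {(concat us @ w, m) | us w m. (\<forall>u\<in>set us. (u,l)\<in>t) \<and> (w,m)\<in>t \<and> m \<noteq> l}"
definition psubst :: "('a + nat) tree \<Rightarrow> 'a tree list \<Rightarrow> 'a tree" where
  "psubst P ts = {(u,m). (u, Inl m) \<in> P} \<union> {(u@w,m) | u w m i. (u, Inr i)\<in>P \<and> (w,m) \<in> ts!i}"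

lemma is_tree_alt: "is_tree t \<longleftrightarrow> finite t \<and>
   (\<forall>u a v b. (u,a)\<in>t \<longrightarrow> (v,b)\<in>t \<longrightarrow> prefix u v \<longrightarrow> u = v \<and> a = b)"
  unfolding is_tree_def by (simp add: Ball_def) blast

lemma mem_star: "(x,m) \<in> star r1 r2 \<longleftrightarrow> (\<exists>u. x = False#u \<and> (u,m)\<in>r1) \<or> (\<exists>u. x = True#u \<and> (u,m)\<in>r2)"
  unfolding star_def by auto


lemma star_tree:
  assumes "is_tree r1" "is_tree r2" shows "is_tree (star r1 r2)"
proof -
  have "finite (star r1 r2)" using assms unfolding is_tree_def star_def by auto
  moreover have "(u,a)\<in>star r1 r2 \<Longrightarrow> (v,b)\<in>star r1 r2 \<Longrightarrow> prefix u v \<Longrightarrow> u = v \<and> a = b" for u a v b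
  proof -
    assume 1: "(u,a)\<in>star r1 r2" and 2: "(v,b)\<in>star r1 r2" and p: "prefix u v"
    from 1 obtain u' x where u: "u = x#u'" "(u',a) \<in> (if x then r2 else r1)"
      unfolding mem_star by (metis (full_types))
    from 2 obtain v' y where v: "v = y#v'" "(v',b) \<in> (if y then r2 else r1)"
      unfolding mem_star by (metis (full_types))
    from p u v have "x = y" "prefix u' v'" by auto
    then show ?thesis using u v assms unfolding is_tree_alt by (cases x) auto
  qed
  ultimately show ?thesis unfolding is_tree_alt by blast
qed

lemma ren_star: "ren \<rho> (star r1 r2) = star (ren \<rho> r1) (ren \<rho> r2)"
  unfolding ren_def star_def by (auto simp: image_iff)

lemma tsub_star: "tsub l Y (star r1 r2) = star (tsub l Y r1) (tsub l Y r2)"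
proof (rule set_eqI)
  fix p :: "bool list \<times> 'a"
  obtain x m where p: "p = (x,m)" by (cases p)
  show "p \<in> tsub l Y (star r1 r2) \<longleftrightarrow> p \<in> star (tsub l Y r1) (tsub l Y r2)"
  proof
    assume "p \<in> tsub l Y (star r1 r2)"
    then consider "(x,m) \<in> star r1 r2" "m \<noteq> l" | v y where "x = v@y" "(v,l) \<in> star r1 r2" "(y,m)\<in>Y"
      unfolding p tsub_def by blast
    then show "p \<in> star (tsub l Y r1) (tsub l Y r2)"
    proof cases
      case 1 then show ?thesis unfolding p mem_star tsub_def by auto
    next
      case 2 then show ?thesis unfolding p mem_star tsub_def by auto
    qed
  next
    assume "p \<in> star (tsub l Y r1) (tsub l Y r2)"
    then obtain b x' where x: "x = b#x'" "(x',m) \<in> tsub l Y (if b then r2 else r1)"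
      unfolding p mem_star by (metis (full_types))
    then consider "(x',m) \<in> (if b then r2 else r1)" "m \<noteq> l" | v y where "x' = v@y" "(v,l) \<in> (if b then r2 else r1)" "(y,m)\<in>Y"
      unfolding tsub_def by blast
    then show "p \<in> tsub l Y (star r1 r2)"
    proof cases
      case 1 then show ?thesis unfolding p x mem_star tsub_def by (cases b) auto
    next
      case 2
      then have "(b#v, l) \<in> star r1 r2" unfolding mem_star by (cases b) auto
      then show ?thesis unfolding p x tsub_def using 2 by auto
    qed
  qed
qed

lemma kernel_cong:
  assumes hom: "\<And>r1 r2. h (star r1 r2) = star (h r1) (h r2)"
  shows "congruence {(r,r'). is_tree r \<and> is_tree r' \<and> h r = h r'}"
  unfolding congruence_def
proof (intro conjI allI impI)
  show "equiv trees {(r,r'). is_tree r \<and> is_tree r' \<and> h r = h r'}"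
    unfolding equiv_def refl_on_def sym_def trans_def trees_def by auto
next
  fix t1 t1' t2 t2'
  assume "(t1, t1') \<in> {(r,r'). is_tree r \<and> is_tree r' \<and> h r = h r'}"
     "(t2, t2') \<in> {(r,r'). is_tree r \<and> is_tree r' \<and> h r = h r'}"
  then show "(star t1 t2, star t1' t2') \<in> {(r,r'). is_tree r \<and> is_tree r' \<and> h r = h r'}"
    by (simp add: star_tree hom)
qed

lemma cp_apply:
  assumes cp: "congruence_preserving n g" and hom: "\<And>r1 r2. h (star r1 r2) = star (h r1) (h r2)"
    and len: "length ts = n" "length ts' = n" and tr: "set ts \<subseteq> trees" "set ts' \<subseteq> trees"
    and eq: "\<forall>i<n. h (ts!i) = h (ts'!i)"
  shows "h (g ts) = h (g ts')"
proof -
  let ?R = "{(r,r'). is_tree r \<and> is_tree r' \<and> h r = h r'}"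
  have c: "congruence ?R" by (rule kernel_cong[OF hom])
  have "(ts!i, ts'!i) \<in> ?R" if "i < n" for i
  proof -
    have "ts!i \<in> trees" "ts'!i \<in> trees" using tr len that nth_mem by (metis subsetD)+
    then show ?thesis using eq that unfolding trees_def by simp
  qed
  then have "list_all2 (\<lambda>t t'. (t, t') \<in> ?R) ts ts'"
    using len by (simp add: list_all2_conv_all_nth)
  then have "(g ts, g ts') \<in> ?R" using cp c len tr unfolding congruence_preserving_def by blast
  then show ?thesis by simp
qed

lemma mem_tsub: "(x,m) \<in> tsub l Y r \<longleftrightarrow> ((x,m) \<in> r \<and> m \<noteq> l) \<or> (\<exists>v y. x = v@y \<and> (v,l) \<in> r \<and> (y,m) \<in> Y)"
  unfolding tsub_def by blast

lemma mem_fixY: "(x,m) \<in> fixY l t \<longleftrightarrow> (\<exists>us w. x = concat us @ w \<and> (\<forall>u\<in>set us. (u,l)\<in>t) \<and> (w,m)\<in>t \<and> m \<noteq> l)"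
  unfolding fixY_def by blast

lemma fixY_fix: "tsub l (fixY l t) t = fixY l t"
proof (rule set_eqI)
  fix p :: "bool list \<times> 'a"
  obtain x m where p: "p = (x,m)" by (cases p)
  show "p \<in> tsub l (fixY l t) t \<longleftrightarrow> p \<in> fixY l t"
  proof
    assume "p \<in> tsub l (fixY l t) t"
    then consider "(x,m) \<in> t" "m \<noteq> l"
      | v y where "x = v@y" "(v,l) \<in> t" "(y,m) \<in> fixY l t"
      unfolding p mem_tsub by blast
    then show "p \<in> fixY l t"
    proof cases
      case 1
      then have "x = concat [] @ x" "\<forall>u\<in>set []. (u,l)\<in>t" by simp_all
      then show ?thesis unfolding p mem_fixY using 1 by blast
    next
      case (2 v y)
      then obtain us w where "y = concat us @ w" "\<forall>u\<in>set us. (u,l)\<in>t" "(w,m)\<in>t" "m \<noteq> l"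
        unfolding mem_fixY by blast
      then have "x = concat (v#us) @ w" "\<forall>u\<in>set (v#us). (u,l)\<in>t" using 2 by auto
      then show ?thesis unfolding p mem_fixY using \<open>(w,m)\<in>t\<close> \<open>m \<noteq> l\<close> by blast
    qed
  next
    assume "p \<in> fixY l t"
    then obtain us w where x: "x = concat us @ w" and a: "\<forall>u\<in>set us. (u,l)\<in>t" "(w,m)\<in>t" "m \<noteq> l"
      unfolding p mem_fixY by blast
    show "p \<in> tsub l (fixY l t) t"
    proof (cases us)
      case Nil then show ?thesis using a x unfolding p mem_tsub by simp
    next
      case (Cons v us')
      have "(concat us' @ w, m) \<in> fixY l t" unfolding mem_fixY using a Cons by auto
      moreover have "(v,l) \<in> t" using a Cons by auto
      moreover have "x = v @ (concat us' @ w)" using x Cons by simp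
      ultimately show ?thesis unfolding p mem_tsub by blast
    qed
  qed
qed

lemma tsub_leaf: "tsub l Y (leaf l) = Y"
  unfolding tsub_def leaf_def by auto

lemma fixY_empty: "([], m) \<in> fixY l t \<Longrightarrow> ([], m) \<in> t"
  unfolding fixY_def by auto

lemma leaf_tree: "is_tree (leaf m)"
  unfolding is_tree_def leaf_def by auto

lemma mem_psubst: "(x,m) \<in> psubst P ts \<longleftrightarrow> (x, Inl m) \<in> P \<or> (\<exists>u w i. x = u@w \<and> (u,Inr i)\<in>P \<and> (w,m)\<in>ts!i)"
  unfolding psubst_def by blast

lemma tsub_psubst_char:
  "(x,m) \<in> tsub l Y (psubst P ts) \<longleftrightarrow>
    ((x,Inl m)\<in>P \<and> m\<noteq>l) \<or> (\<exists>v y. x=v@y \<and> (v,Inl l)\<in>P \<and> (y,m)\<in>Y) \<or>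
    (\<exists>u z i. x = u@z \<and> (u,Inr i)\<in>P \<and> (z,m) \<in> tsub l Y (ts!i))"
proof
  assume "(x,m) \<in> tsub l Y (psubst P ts)"
  then consider "(x,m) \<in> psubst P ts" "m \<noteq> l" | v y where "x = v@y" "(v,l) \<in> psubst P ts" "(y,m)\<in>Y"
    unfolding mem_tsub by blast
  then show "((x,Inl m)\<in>P \<and> m\<noteq>l) \<or> (\<exists>v y. x=v@y \<and> (v,Inl l)\<in>P \<and> (y,m)\<in>Y) \<or>
    (\<exists>u z i. x = u@z \<and> (u,Inr i)\<in>P \<and> (z,m) \<in> tsub l Y (ts!i))"
  proof cases
    case 1 then show ?thesis unfolding mem_psubst mem_tsub by blast
  next
    case (2 v y)
    from 2(2) consider "(v, Inl l) \<in> P" | u w i where "v = u@w" "(u,Inr i)\<in>P" "(w,l)\<in>ts!i"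
      unfolding mem_psubst by blast
    then show ?thesis
    proof cases
      case 1 then show ?thesis using 2 by blast
    next
      case (2 u w i)
      then have "(w@y,m) \<in> tsub l Y (ts!i)" unfolding mem_tsub using \<open>(y,m)\<in>Y\<close> by blast
      moreover have "x = u@(w@y)" using \<open>x = v@y\<close> 2 by simp
      ultimately show ?thesis using 2 by blast
    qed
  qed
next
  assume "((x,Inl m)\<in>P \<and> m\<noteq>l) \<or> (\<exists>v y. x=v@y \<and> (v,Inl l)\<in>P \<and> (y,m)\<in>Y) \<or>
    (\<exists>u z i. x = u@z \<and> (u,Inr i)\<in>P \<and> (z,m) \<in> tsub l Y (ts!i))"
  then consider "(x,Inl m)\<in>P" "m\<noteq>l" | v y where "x=v@y" "(v,Inl l)\<in>P" "(y,m)\<in>Y"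
    | u z i where "x = u@z" "(u,Inr i)\<in>P" "(z,m) \<in> tsub l Y (ts!i)" by blast
  then show "(x,m) \<in> tsub l Y (psubst P ts)"
  proof cases
    case 1 then show ?thesis unfolding mem_psubst mem_tsub by blast
  next
    case (2 v y)
    then have "(v,l) \<in> psubst P ts" unfolding mem_psubst by blast
    then show ?thesis unfolding mem_tsub using 2 by blast
  next
    case (3 u z i)
    from 3(3) consider "(z,m)\<in>ts!i" "m\<noteq>l" | w y where "z = w@y" "(w,l)\<in>ts!i" "(y,m)\<in>Y"
      unfolding mem_tsub by blast
    then show ?thesis
    proof cases
      case 1 then have "(x,m) \<in> psubst P ts" unfolding mem_psubst using 3 by blast
      then show ?thesis unfolding mem_tsub using 1 by blast
    next
      case (2 w y)
      then have "(u@w,l) \<in> psubst P ts" unfolding mem_psubst using 3 by blast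
      moreover have "x = (u@w)@y" using 3 2 by simp
      ultimately show ?thesis unfolding mem_tsub using 2 by blast
    qed
  qed
qed

lemma tsub_psubst_eq:
  assumes "\<And>u i. (u, Inr i) \<in> P \<Longrightarrow> tsub l Y (ts!i) = tsub l Y (ts'!i)"
  shows "tsub l Y (psubst P ts) = tsub l Y (psubst P ts')"
proof (rule set_eqI)
  fix p :: "bool list \<times> 'a"
  obtain x m where p: "p = (x,m)" by (cases p)
  show "p \<in> tsub l Y (psubst P ts) \<longleftrightarrow> p \<in> tsub l Y (psubst P ts')"
  proof -
    have "\<And>u z i. (u,Inr i)\<in>P \<Longrightarrow> (z,m) \<in> tsub l Y (ts!i) \<longleftrightarrow> (z,m) \<in> tsub l Y (ts'!i)"
      using assms by simp
    then show ?thesis unfolding p tsub_psubst_char by blast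
  qed
qed

lemma tree_prefix: "is_tree G \<Longrightarrow> (u,a)\<in>G \<Longrightarrow> (v,b)\<in>G \<Longrightarrow> prefix u v \<Longrightarrow> u = v \<and> a = b"
  unfolding is_tree_alt by blast

lemma tree_root: assumes "is_tree t" "([],m) \<in> t" shows "t = leaf m"
proof -
  have "v = [] \<and> b = m" if "(v,b)\<in>t" for v b
  proof -
    have "prefix [] v" by simp
    then show ?thesis using tree_prefix[OF assms(1) assms(2) that] by simp
  qed
  then show ?thesis using assms(2) unfolding leaf_def by fast
qed

lemma inj_step:
  assumes G: "is_tree G" and um: "(u,m)\<in>G" "m \<noteq> l" and ll: "l \<noteq> l'"
    and e1: "tsub l Y1 G = tsub l Y1 Q" and e2: "tsub l' Y2 G = tsub l' Y2 Q"
  shows "(u,m)\<in>Q \<or> ((u,l)\<in>Q \<and> ([],m)\<in>Y1)"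
proof -
  have "(u,m) \<in> tsub l Y1 G" unfolding mem_tsub using um by simp
  then have "(u,m) \<in> tsub l Y1 Q" using e1 by simp
  then have "((u,m) \<in> Q \<and> m \<noteq> l) \<or> (\<exists>v y. u = v@y \<and> (v,l) \<in> Q \<and> (y,m) \<in> Y1)"
    by (simp only: mem_tsub)
  then consider "(u,m)\<in>Q" | v y where "u = v@y" "(v,l)\<in>Q" "(y,m)\<in>Y1"
    by blast
  then show ?thesis
  proof cases
    case 1 then show ?thesis by simp
  next
    case (2 v y)
    show ?thesis
    proof (cases "y = []")
      case True then show ?thesis using 2 by simp
    next
      case False
      have "(v,l) \<in> tsub l' Y2 Q" unfolding mem_tsub using 2 ll by simp
      then have "(v,l) \<in> tsub l' Y2 G" using e2 by simp
      then have "((v,l) \<in> G \<and> l \<noteq> l') \<or> (\<exists>v' y'. v = v'@y' \<and> (v',l') \<in> G \<and> (y',l) \<in> Y2)"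
        by (simp only: mem_tsub)
      then obtain v' y' c where vv: "v = v'@y'" "(v',c)\<in>G"
      proof (elim disjE exE conjE)
        assume "(v,l) \<in> G" then show thesis using that[of v "[]" l] by simp
      next
        fix v' y' assume "v = v'@y'" "(v',l') \<in> G" then show thesis using that by blast
      qed
      then have pre: "prefix v' u" "length v' < length u" using 2 False by auto
      then have "v' = u" using tree_prefix[OF G vv(2) um(1)] by blast
      then show ?thesis using pre by simp
    qed
  qed
qed

lemma inj_half:
  assumes G: "is_tree G" and Q: "is_tree Q" and ab: "a \<noteq> b" and t: "is_tree t"
    and ta: "t \<noteq> leaf a" and tb: "t \<noteq> leaf b"
    and ea: "tsub a (fixY a t) G = tsub a (fixY a t) Q"
    and eb: "tsub b (fixY b t) G = tsub b (fixY b t) Q"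
  shows "G \<subseteq> Q"
proof
  fix p assume "p \<in> G"
  obtain u m where p: "p = (u,m)" by (cases p)
  have um: "(u,m) \<in> G" using \<open>p \<in> G\<close> p by simp
  have noa: "([],a) \<notin> fixY l t" for l
  proof
    assume "([],a) \<in> fixY l t"
    then have "t = leaf a" by (rule tree_root[OF t fixY_empty])
    with ta show False ..
  qed
  have nob: "([],b) \<notin> fixY l t" for l
  proof
    assume "([],b) \<in> fixY l t"
    then have "t = leaf b" by (rule tree_root[OF t fixY_empty])
    with tb show False ..
  qed
  have "(u,m) \<in> Q"
  proof (cases "m = a")
    case True
    have "m \<noteq> b" using True ab by simp
    from inj_step[OF G um(1) this ab[symmetric] eb ea] show ?thesis using noa True by simp
  next
    case ma: False
    show ?thesis
    proof (cases "m = b")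
      case True
      from inj_step[OF G um(1) ma ab ea eb] show ?thesis using nob True by simp
    next
      case False
      have 1: "(u,m)\<in>Q \<or> (u,a)\<in>Q" using inj_step[OF G um ma ab ea eb] by blast
      have 2: "(u,m)\<in>Q \<or> (u,b)\<in>Q" using inj_step[OF G um False ab[symmetric] eb ea] by blast
      have "\<not> ((u,a)\<in>Q \<and> (u,b)\<in>Q)" using tree_prefix[OF Q, of u a u b] ab by auto
      then show ?thesis using 1 2 by blast
    qed
  qed
  then show "p \<in> Q" using p by simp
qed

lemma star_empty: "star x y = {} \<longleftrightarrow> x = {} \<and> y = {}"
  unfolding star_def by auto

lemma star_nil: "([],c) \<notin> star x y"
  unfolding star_def by auto

lemma star_inj: assumes "star x y = star x' y'" shows "x = x' \<and> y = y'"
proof -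
  have "(u,c) \<in> x \<longleftrightarrow> (u,c) \<in> x'" for u c
    using arg_cong[OF assms, of "\<lambda>S. (False#u,c) \<in> S"] unfolding mem_star by simp
  moreover have "(u,c) \<in> y \<longleftrightarrow> (u,c) \<in> y'" for u c
    using arg_cong[OF assms, of "\<lambda>S. (True#u,c) \<in> S"] unfolding mem_star by simp
  ultimately show ?thesis by auto
qed

lemma poly_eval_empty: "poly_eval ts P r \<Longrightarrow> P = {} \<Longrightarrow> r = {}"
  by (induction rule: poly_eval.induct) (auto simp: star_empty)

lemma root_star: "{([],c)} \<noteq> star x y"
proof
  assume h: "{([],c)} = star x y"
  have "([],c) \<in> star x y" using h[symmetric] by simp
  then show False using star_nil by metis
qed

lemma poly_eval_fun: "poly_eval ts P r1 \<Longrightarrow> poly_eval ts P r2 \<Longrightarrow> r1 = r2"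
proof (induction arbitrary: r2 rule: poly_eval.induct)
  case pe_zero
  then show ?case using poly_eval_empty by blast
next
  case (pe_letter a)
  from pe_letter show ?case
  proof (cases rule: poly_eval.cases)
    case (pe_star P1 r1 P2 r2)
    then show ?thesis using root_star by metis
  qed auto
next
  case (pe_var i)
  from pe_var show ?case
  proof (cases rule: poly_eval.cases)
    case (pe_star P1 r1 P2 r2)
    then show ?thesis using root_star by metis
  qed auto
next
  case (pe_star P1 s1 P2 s2 r)
  have h1: "poly_eval ts P1 s1" "poly_eval ts P2 s2" by fact+
  have ih1: "\<And>r. poly_eval ts P1 r \<Longrightarrow> s1 = r" by fact
  have ih2: "\<And>r. poly_eval ts P2 r \<Longrightarrow> s2 = r" by fact
  from pe_star.prems show ?case
  proof (cases rule: poly_eval.cases)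
    case pe_zero
    then have "P1 = {}" "P2 = {}" using star_empty by metis+
    then have "s1 = {}" "s2 = {}" using h1 poly_eval_empty by metis+
    then show ?thesis using pe_zero by (simp add: star_empty)
  next
    case (pe_letter a)
    then show ?thesis using root_star by metis
  next
    case (pe_var i)
    then show ?thesis using root_star by metis
  next
    case (pe_star Q1 t1 Q2 t2)
    then have "P1 = Q1" "P2 = Q2" using star_inj by blast+
    then show ?thesis using ih1 ih2 pe_star by simp
  qed
qed

lemma psubst_star: "psubst (star P0 P1) ts = star (psubst P0 ts) (psubst P1 ts)"
proof (rule set_eqI)
  fix p :: "bool list \<times> 'a"
  obtain x m where p: "p = (x,m)" by (cases p)
  show "p \<in> psubst (star P0 P1) ts \<longleftrightarrow> p \<in> star (psubst P0 ts) (psubst P1 ts)"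
  proof
    assume "p \<in> psubst (star P0 P1) ts"
    then consider "(x, Inl m) \<in> star P0 P1" | u w i where "x = u@w" "(u,Inr i)\<in>star P0 P1" "(w,m)\<in>ts!i"
      unfolding p mem_psubst by blast
    then show "p \<in> star (psubst P0 ts) (psubst P1 ts)"
    proof cases
      case 1 then show ?thesis unfolding p mem_star mem_psubst by blast
    next
      case (2 u w i)
      then obtain b u' where "u = b#u'" "(u',Inr i) \<in> (if b then P1 else P0)"
        unfolding mem_star by (metis (full_types))
      then have "(u'@w, m) \<in> psubst (if b then P1 else P0) ts" "x = b#(u'@w)"
        unfolding mem_psubst using 2 by auto
      then show ?thesis unfolding p mem_star by (cases b) auto
    qed
  next
    assume "p \<in> star (psubst P0 ts) (psubst P1 ts)"
    then obtain b x' where x: "x = b#x'" "(x',m) \<in> psubst (if b then P1 else P0) ts"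
      unfolding p mem_star by (metis (full_types))
    then consider "(x', Inl m) \<in> (if b then P1 else P0)" | u w i where "x' = u@w" "(u,Inr i)\<in>(if b then P1 else P0)" "(w,m)\<in>ts!i"
      unfolding mem_psubst by blast
    then show "p \<in> psubst (star P0 P1) ts"
    proof cases
      case 1
      then have "(x, Inl m) \<in> star P0 P1" unfolding x mem_star by (cases b) auto
      then show ?thesis unfolding p mem_psubst by blast
    next
      case (2 u w i)
      then have "(b#u, Inr i) \<in> star P0 P1" unfolding mem_star by (cases b) auto
      moreover have "x = (b#u)@w" using x 2 by simp
      ultimately show ?thesis unfolding p mem_psubst using 2 by blast
    qed
  qed
qed

lemma psubst_empty: "psubst {} ts = {}"
  unfolding psubst_def by simp

lemma psubst_letter: "psubst {([],Inl a)} ts = {([],a)}"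
  unfolding psubst_def by auto

lemma psubst_var: "psubst {([],Inr i)} ts = ts!i"
  unfolding psubst_def by auto

lemma tree_decomp:
  fixes P :: "('b) tree"
  assumes t: "is_tree P" and nr: "\<And>c. ([],c) \<notin> P"
  defines "P0 \<equiv> {(u,c). (False#u,c)\<in>P}" and "P1 \<equiv> {(u,c). (True#u,c)\<in>P}"
  shows "P = star P0 P1" "is_tree P0" "is_tree P1"
proof -
  show "P = star P0 P1"
  proof (rule set_eqI)
    fix p :: "bool list \<times> 'b"
    obtain x m where p: "p = (x,m)" by (cases p)
    show "p \<in> P \<longleftrightarrow> p \<in> star P0 P1"
    proof
      assume "p \<in> P"
      then have "x \<noteq> []" using nr p by auto
      then obtain b x' where "x = b#x'" by (cases x) auto
      then show "p \<in> star P0 P1" using \<open>p \<in> P\<close> unfolding p mem_star P0_def P1_def by (cases b) auto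
    next
      assume "p \<in> star P0 P1"
      then show "p \<in> P" unfolding p mem_star P0_def P1_def by auto
    qed
  qed
  have fin: "finite P" using t unfolding is_tree_def by simp
  have "P0 = (\<lambda>(u,c). (tl u, c)) ` {(u,c)\<in>P. hd u = False \<and> u \<noteq> []}"
  proof (rule set_eqI)
    fix p :: "bool list \<times> 'b"
    obtain x m where p: "p = (x,m)" by (cases p)
    show "p \<in> P0 \<longleftrightarrow> p \<in> (\<lambda>(u,c). (tl u, c)) ` {(u,c)\<in>P. hd u = False \<and> u \<noteq> []}"
      unfolding p P0_def image_iff by (auto simp: neq_Nil_conv) (metis list.sel(1) list.sel(3) list.simps(3))
  qed
  moreover have "finite {(u,c)\<in>P. hd u = False \<and> u \<noteq> []}"
    by (rule finite_subset[OF _ fin]) auto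
  ultimately have f0: "finite P0" by simp
  have "P1 = (\<lambda>(u,c). (tl u, c)) ` {(u,c)\<in>P. hd u = True \<and> u \<noteq> []}"
  proof (rule set_eqI)
    fix p :: "bool list \<times> 'b"
    obtain x m where p: "p = (x,m)" by (cases p)
    show "p \<in> P1 \<longleftrightarrow> p \<in> (\<lambda>(u,c). (tl u, c)) ` {(u,c)\<in>P. hd u = True \<and> u \<noteq> []}"
      unfolding p P1_def image_iff by (auto simp: neq_Nil_conv) (metis list.sel(1) list.sel(3) list.simps(3))
  qed
  moreover have "finite {(u,c)\<in>P. hd u = True \<and> u \<noteq> []}"
    by (rule finite_subset[OF _ fin]) auto
  ultimately have f1: "finite P1" by simp
  have "u = v \<and> a = b" if "(u,a)\<in>P0" "(v,b)\<in>P0" "prefix u v" for u a v b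
    using tree_prefix[OF t, of "False#u" a "False#v" b] that unfolding P0_def by simp
  then show "is_tree P0" using f0 unfolding is_tree_alt by blast
  have "u = v \<and> a = b" if "(u,a)\<in>P1" "(v,b)\<in>P1" "prefix u v" for u a v b
    using tree_prefix[OF t, of "True#u" a "True#v" b] that unfolding P1_def by simp
  then show "is_tree P1" using f1 unfolding is_tree_alt by blast
qed

lemma psubst_eval_bound:
  "\<forall>P. is_tree P \<longrightarrow> (\<forall>(u,c)\<in>P. length u \<le> N) \<longrightarrow> poly_eval ts P (psubst P ts)"
proof (induction N)
  case 0
  show ?case
  proof (intro allI impI)
    fix P :: "('a + nat) tree" assume t: "is_tree P" and b: "\<forall>(u,c)\<in>P. length u \<le> 0"
    show "poly_eval ts P (psubst P ts)"
    proof (cases "P = {}")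
      case True then show ?thesis by (simp add: psubst_empty pe_zero)
    next
      case False
      then obtain u c where "(u,c) \<in> P" by auto
      then have "u = []" using b by auto
      then have P: "P = {([],c)}" using tree_root[OF t] \<open>(u,c)\<in>P\<close> unfolding leaf_def by simp
      show ?thesis
      proof (cases c)
        case (Inl a) then show ?thesis unfolding P by (simp add: psubst_letter pe_letter)
      next
        case (Inr i) then show ?thesis unfolding P by (simp add: psubst_var pe_var)
      qed
    qed
  qed
next
  case (Suc N)
  show ?case
  proof (intro allI impI)
    fix P :: "('a + nat) tree" assume t: "is_tree P" and b: "\<forall>(u,c)\<in>P. length u \<le> Suc N"
    show "poly_eval ts P (psubst P ts)"
    proof (cases "\<exists>c. ([],c) \<in> P")
      case True
      then obtain c where "([],c) \<in> P" by auto
      then have P: "P = {([],c)}" using tree_root[OF t] unfolding leaf_def by simp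
      show ?thesis
      proof (cases c)
        case (Inl a) then show ?thesis unfolding P by (simp add: psubst_letter pe_letter)
      next
        case (Inr i) then show ?thesis unfolding P by (simp add: psubst_var pe_var)
      qed
    next
      case False
      then have nr: "\<And>c. ([],c) \<notin> P" by auto
      let ?P0 = "{(u,c). (False#u,c)\<in>P}" and ?P1 = "{(u,c). (True#u,c)\<in>P}"
      have d: "P = star ?P0 ?P1" "is_tree ?P0" "is_tree ?P1" using tree_decomp[OF t nr] by auto
      have b0: "\<forall>(u,c)\<in>?P0. length u \<le> N" using b by auto
      have b1: "\<forall>(u,c)\<in>?P1. length u \<le> N" using b by auto
      have "poly_eval ts ?P0 (psubst ?P0 ts)" using Suc.IH d(2) b0 by blast
      moreover have "poly_eval ts ?P1 (psubst ?P1 ts)" using Suc.IH d(3) b1 by blast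
      ultimately have "poly_eval ts (star ?P0 ?P1) (star (psubst ?P0 ts) (psubst ?P1 ts))"
        by (rule pe_star)
      then show ?thesis using d(1) psubst_star by metis
    qed
  qed
qed

lemma psubst_eval: assumes t: "is_tree P" shows "poly_eval ts P (psubst P ts)"
proof -
  have fin: "finite P" using t unfolding is_tree_def by simp
  let ?N = "\<Sum>p\<in>P. length (fst p)"
  have "\<forall>(u,c)\<in>P. length u \<le> ?N"
  proof (intro ballI, clarify)
    fix u c assume "(u,c) \<in> P"
    then have "length (fst (u,c)) \<le> ?N" using member_le_sum[OF _ _ fin, of "(u,c)" "\<lambda>p. length (fst p)"] by simp
    then show "length u \<le> ?N" by simp
  qed
  then show ?thesis using psubst_eval_bound t by blast
qed

lemma poly_fun_eq: assumes t: "is_tree P" shows "poly_fun P ts = psubst P ts"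
  unfolding poly_fun_def
proof (rule the_equality)
  show "poly_eval ts P (psubst P ts)" by (rule psubst_eval[OF t])
next
  fix r assume "poly_eval ts P r"
  then show "r = psubst P ts" using poly_eval_fun psubst_eval[OF t] by blast
qed

lemma eval_tree:
  "poly_eval ts P r \<Longrightarrow> (\<forall>u i. (u,Inr i)\<in>P \<longrightarrow> i < length ts) \<Longrightarrow> set ts \<subseteq> trees \<Longrightarrow> is_tree r"
proof (induction rule: poly_eval.induct)
  case pe_zero then show ?case unfolding is_tree_def by simp
next
  case (pe_letter a) then show ?case using leaf_tree unfolding leaf_def by metis
next
  case (pe_var i)
  then have "i < length ts" by auto
  then have "ts!i \<in> set ts" by (rule nth_mem)
  then show ?case using pe_var.prems(2) unfolding trees_def by auto
next
  case (pe_star P1 r1 P2 r2)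
  have "\<forall>u i. (u,Inr i)\<in>P1 \<longrightarrow> i < length ts"
  proof (intro allI impI)
    fix u i assume "(u, Inr i) \<in> P1"
    then have "(False#u, Inr i) \<in> star P1 P2" unfolding mem_star by simp
    then show "i < length ts" using pe_star.prems(1) by blast
  qed
  moreover have "\<forall>u i. (u,Inr i)\<in>P2 \<longrightarrow> i < length ts"
  proof (intro allI impI)
    fix u i assume "(u, Inr i) \<in> P2"
    then have "(True#u, Inr i) \<in> star P1 P2" unfolding mem_star by simp
    then show "i < length ts" using pe_star.prems(1) by blast
  qed
  ultimately have "is_tree r1" "is_tree r2" using pe_star.IH pe_star.prems(2) by simp_all
  then show ?case by (rule star_tree)
qed

lemma psubst_tree:
  assumes "is_poly n P" "length ts = n" "set ts \<subseteq> trees"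
  shows "is_tree (psubst P ts)"
proof -
  have "is_tree P" using assms(1) unfolding is_poly_def by simp
  moreover have "\<forall>u i. (u,Inr i)\<in>P \<longrightarrow> i < length ts" using assms(1,2) unfolding is_poly_def by auto
  ultimately show ?thesis using eval_tree[OF psubst_eval[OF \<open>is_tree P\<close>]] assms(3) by simp
qed

definition tup :: "nat \<Rightarrow> 'b set \<Rightarrow> 'b list set" where
  "tup n A = {xs. length xs = n \<and> set xs \<subseteq> A}"

lemma tup_upd: "xs \<in> tup n A \<Longrightarrow> w \<in> A \<Longrightarrow> xs[j:=w] \<in> tup n A"
  unfolding tup_def using set_update_subset_insert by fastforce

lemma tup_nth: "xs \<in> tup n A \<Longrightarrow> j < n \<Longrightarrow> xs!j \<in> A"
  unfolding tup_def using nth_mem by blast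

lemma take_drop_step:
  assumes "length xs = n" "length ys = n" "k < n"
  shows "take (Suc k) ys @ drop (Suc k) xs = (take k ys @ drop k xs)[k := ys!k]"
  using assms by (auto simp: list_eq_iff_nth_eq nth_append nth_list_update min_def)

lemma tup_connect:
  assumes step: "\<And>xs j w. xs \<in> tup n A \<Longrightarrow> j < n \<Longrightarrow> w \<in> A \<Longrightarrow> Q xs \<Longrightarrow> Q (xs[j:=w])"
    and xs: "xs \<in> tup n A" and ys: "ys \<in> tup n A" and q: "Q xs"
  shows "Q ys"
proof -
  have "k \<le> n \<longrightarrow> (take k ys @ drop k xs \<in> tup n A \<and> Q (take k ys @ drop k xs))" for k
  proof (induction k)
    case 0 then show ?case using xs q by simp
  next
    case (Suc k)
    show ?case
    proof
      assume "Suc k \<le> n"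
      then have kn: "k < n" by simp
      then have ih: "take k ys @ drop k xs \<in> tup n A" "Q (take k ys @ drop k xs)" using Suc.IH by auto
      have e: "take (Suc k) ys @ drop (Suc k) xs = (take k ys @ drop k xs)[k := ys!k]"
        using take_drop_step xs ys kn unfolding tup_def by blast
      have w: "ys!k \<in> A" using tup_nth[OF ys kn] .
      show "take (Suc k) ys @ drop (Suc k) xs \<in> tup n A \<and> Q (take (Suc k) ys @ drop (Suc k) xs)"
        unfolding e using tup_upd[OF ih(1) w] step[OF ih(1) kn w ih(2)] by simp
    qed
  qed
  then have "Q (take n ys @ drop n xs)" by blast
  moreover have "take n ys @ drop n xs = ys" using xs ys unfolding tup_def by simp
  ultimately show ?thesis by simp
qed

definition rn :: "'b \<Rightarrow> 'b \<Rightarrow> 'b \<Rightarrow> 'b" where "rn x y z = (if z = x then y else z)"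

lemma rn_eq: "rn x y p = rn x y q \<longleftrightarrow> p = q \<or> (p = x \<and> q = y) \<or> (p = y \<and> q = x)"
  unfolding rn_def by auto

locale clone_setup =
  fixes \<phi> :: "'b list \<Rightarrow> 'b" and a b c :: 'b and n :: nat
  assumes abc: "a \<noteq> b" "a \<noteq> c" "b \<noteq> c"
    and pres: "\<And>(\<rho>::'b\<Rightarrow>'b) xs ys. xs \<in> tup n {a,b,c} \<Longrightarrow> ys \<in> tup n {a,b,c} \<Longrightarrow> map \<rho> xs = map \<rho> ys \<Longrightarrow> \<rho> (\<phi> xs) = \<rho> (\<phi> ys)"
begin

lemma pair:
  assumes xs: "xs \<in> tup n {a,b,c}" and i: "i < n" and x: "x \<in> {a,b,c}" and y: "y \<in> {a,b,c}"
  shows "rn x y (\<phi> (xs[i:=x])) = rn x y (\<phi> (xs[i:=y]))"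
proof -
  have "map (rn x y) (xs[i:=x]) = map (rn x y) (xs[i:=y])" by (simp add: map_update rn_def)
  then show ?thesis by (rule pres[where \<rho>="rn x y", OF tup_upd[OF xs x] tup_upd[OF xs y]])
qed

lemma S1:
  assumes xs: "xs \<in> tup n {a,b,c}" and i: "i < n"
  shows "(\<forall>v\<in>{a,b,c}. \<phi> (xs[i:=v]) = \<phi> (xs[i:=a])) \<or> (\<forall>v\<in>{a,b,c}. \<phi> (xs[i:=v]) = v)"
proof -
  define p where "p = \<phi> (xs[i:=a])"
  define q where "q = \<phi> (xs[i:=b])"
  define r where "r = \<phi> (xs[i:=c])"
  have 1: "rn a b p = rn a b q" using pair[OF xs i, of a b] unfolding p_def q_def by simp
  have 3: "rn a c p = rn a c r" using pair[OF xs i, of a c] unfolding p_def r_def by simp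
  have 5: "rn b c q = rn b c r" using pair[OF xs i, of b c] unfolding q_def r_def by simp
  have "(p = q \<and> p = r) \<or> (p = a \<and> q = b \<and> r = c)"
    using 1 3 5 abc unfolding rn_eq by blast
  then show ?thesis unfolding p_def q_def r_def by auto
qed

lemma two_avoid: "\<exists>x1 x2. x1 \<in> {a,b,c} \<and> x2 \<in> {a,b,c} \<and> x1 \<noteq> x2 \<and> x1 \<noteq> k \<and> x2 \<noteq> k"
proof (cases "k = a")
  case True then show ?thesis using abc by blast
next
  case False
  then show ?thesis
  proof (cases "k = b")
    case True then show ?thesis using abc by blast
  next
    case False
    then show ?thesis using abc \<open>k \<noteq> a\<close> by blast
  qed
qed

lemma S2:
  assumes xs: "xs \<in> tup n {a,b,c}" and i: "i < n" and j: "j < n" and ij: "i \<noteq> j" and w: "w \<in> {a,b,c}"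
    and idx: "\<forall>v\<in>{a,b,c}. \<phi> (xs[i:=v]) = v"
  shows "\<forall>v\<in>{a,b,c}. \<phi> ((xs[j:=w])[i:=v]) = v"
proof -
  have xw: "xs[j:=w] \<in> tup n {a,b,c}" by (rule tup_upd[OF xs w])
  from S1[OF xw i] show ?thesis
  proof
    assume const: "\<forall>v\<in>{a,b,c}. \<phi> ((xs[j:=w])[i:=v]) = \<phi> ((xs[j:=w])[i:=a])"
    define k where "k = \<phi> ((xs[j:=w])[i:=a])"
    have xj: "xs!j \<in> {a,b,c}" by (rule tup_nth[OF xs j])
    have key: "x = xs!j" if x: "x \<in> {a,b,c}" "x \<noteq> k" for x
    proof -
      have zs: "xs[i:=x] \<in> tup n {a,b,c}" by (rule tup_upd[OF xs x(1)])
      have e1: "(xs[i:=x])[j:=xs!j] = xs[i:=x]" using ij by (metis list_update_id nth_list_update_neq)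
      have e2: "(xs[i:=x])[j:=w] = (xs[j:=w])[i:=x]" using ij by (simp add: list_update_swap)
      have vx: "\<phi> (xs[i:=x]) = x" using idx x by blast
      from S1[OF zs j] show ?thesis
      proof
        assume c2: "\<forall>v\<in>{a,b,c}. \<phi> ((xs[i:=x])[j:=v]) = \<phi> ((xs[i:=x])[j:=a])"
        have "\<phi> ((xs[i:=x])[j:=w]) = \<phi> ((xs[i:=x])[j:=xs!j])" using c2 w xj by metis
        then have "k = x" using e1 e2 vx const x unfolding k_def by metis
        then show ?thesis using x by simp
      next
        assume "\<forall>v\<in>{a,b,c}. \<phi> ((xs[i:=x])[j:=v]) = v"
        then have "\<phi> ((xs[i:=x])[j:=xs!j]) = xs!j" using xj by blast
        then show ?thesis using e1 vx by simp
      qed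
    qed
    obtain x1 x2 where "x1 \<in> {a,b,c}" "x2 \<in> {a,b,c}" "x1 \<noteq> x2" "x1 \<noteq> k" "x2 \<noteq> k"
      using two_avoid by blast
    then have False using key by metis
    then show ?thesis ..
  qed
qed

lemma clone:
  "(\<exists>i<n. \<forall>xs\<in>tup n {a,b,c}. \<phi> xs = xs!i) \<or> (\<forall>xs\<in>tup n {a,b,c}. \<phi> xs = \<phi> (replicate n a))"
proof (cases "\<exists>i<n. \<exists>xs\<in>tup n {a,b,c}. \<forall>v\<in>{a,b,c}. \<phi> (xs[i:=v]) = v")
  case True
  then obtain i xs where i: "i < n" and xs: "xs \<in> tup n {a,b,c}" and id0: "\<forall>v\<in>{a,b,c}. \<phi> (xs[i:=v]) = v"
    by blast
  have "\<forall>v\<in>{a,b,c}. \<phi> (ys[i:=v]) = v" if ys: "ys \<in> tup n {a,b,c}" for ys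
  proof (rule tup_connect[where Q = "\<lambda>zs. \<forall>v\<in>{a,b,c}. \<phi> (zs[i:=v]) = v", OF _ xs ys id0])
    fix zs j w assume zs: "zs \<in> tup n {a,b,c}" and j: "j < n" and w: "w \<in> {a,b,c}"
      and q: "\<forall>v\<in>{a,b,c}. \<phi> (zs[i:=v]) = v"
    show "\<forall>v\<in>{a,b,c}. \<phi> ((zs[j:=w])[i:=v]) = v"
    proof (cases "j = i")
      case True then show ?thesis using q by simp
    next
      case False then show ?thesis using S2[OF zs i j _ w q] by simp
    qed
  qed
  then have "\<phi> ys = ys!i" if ys: "ys \<in> tup n {a,b,c}" for ys
  proof -
    have "\<phi> (ys[i:=ys!i]) = ys!i" using \<open>\<And>ys. ys \<in> tup n {a,b,c} \<Longrightarrow> _\<close>[OF ys] tup_nth[OF ys i] by blast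
    then show ?thesis by simp
  qed
  then show ?thesis using i by blast
next
  case False
  then have const: "\<forall>v\<in>{a,b,c}. \<phi> (xs[i:=v]) = \<phi> (xs[i:=a])" if "xs \<in> tup n {a,b,c}" "i < n" for xs i
    using S1[OF that] that False by blast
  have rep: "replicate n a \<in> tup n {a,b,c}" unfolding tup_def by auto
  have "\<phi> ys = \<phi> (replicate n a)" if ys: "ys \<in> tup n {a,b,c}" for ys
  proof (rule tup_connect[where Q = "\<lambda>zs. \<phi> zs = \<phi> (replicate n a)", OF _ rep ys refl])
    fix zs j w assume zs: "zs \<in> tup n {a,b,c}" and j: "j < n" and w: "w \<in> {a,b,c}"
      and q: "\<phi> zs = \<phi> (replicate n a)"
    have "\<phi> (zs[j:=w]) = \<phi> (zs[j:=a])" using const[OF zs j] w by blast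
    also have "\<dots> = \<phi> (zs[j:=zs!j])" using const[OF zs j] tup_nth[OF zs j] by metis
    also have "\<dots> = \<phi> zs" by simp
    finally show "\<phi> (zs[j:=w]) = \<phi> (replicate n a)" using q by simp
  qed
  then show ?thesis by blast
qed

end

lemma three_elems:
  assumes "card (UNIV :: 'a set) \<ge> 3"
  obtains a b c :: 'a where "a \<noteq> b" "a \<noteq> c" "b \<noteq> c"
proof -
  obtain T :: "'a set" where "card T = 3" using obtain_subset_with_card_n[OF assms] by metis
  then show ?thesis using that unfolding card_3_iff by blast
qed

lemma ren_leaf: "ren \<rho> (leaf x) = leaf (\<rho> x)"
  unfolding ren_def leaf_def by simp

lemma fst_ren: "fst ` ren \<rho> r = fst ` r"
  unfolding ren_def by (force simp: image_iff)

lemma map_leaf_trees: "set (map leaf xs) \<subseteq> trees"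
  unfolding trees_def using leaf_tree by auto

lemma ren_G:
  assumes cp: "congruence_preserving n g" and xs: "length xs = n" and ys: "length ys = n"
    and e: "map \<rho> xs = map \<rho> ys"
  shows "ren \<rho> (g (map leaf xs)) = ren \<rho> (g (map leaf ys))"
proof (rule cp_apply[OF cp ren_star])
  show "length (map leaf xs) = n" "length (map leaf ys) = n" using xs ys by simp_all
  show "set (map leaf xs) \<subseteq> trees" "set (map leaf ys) \<subseteq> trees" by (rule map_leaf_trees)+
  show "\<forall>i<n. ren \<rho> (map leaf xs ! i) = ren \<rho> (map leaf ys ! i)"
  proof (intro allI impI)
    fix i assume "i < n"
    have "\<rho> (xs!i) = \<rho> (ys!i)" using e \<open>i < n\<close> xs ys by (metis nth_map)
    then show "ren \<rho> (map leaf xs ! i) = ren \<rho> (map leaf ys ! i)"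
      using \<open>i < n\<close> xs ys by (simp add: ren_leaf)
  qed
qed

theorem mainTheorem1:
  fixes g :: "'a tree list \<Rightarrow> 'a tree" and n :: nat
  assumes "finite (UNIV :: 'a set)" and "card (UNIV :: 'a set) \<ge> 3"
    and "n \<ge> 1"
    and "\<forall>ts. length ts = n \<and> set ts \<subseteq> trees \<longrightarrow> g ts \<in> trees"
    and "congruence_preserving n g"
  shows "\<exists>P. is_poly n P \<and>
           (\<forall>ts. length ts = n \<and> set ts \<subseteq> trees \<longrightarrow> g ts = poly_fun P ts)"
proof -
  note gtree = assms(4) and cp = assms(5)
  obtain a b c :: 'a where abc: "a \<noteq> b" "a \<noteq> c" "b \<noteq> c" using three_elems[OF assms(2)] by metis
  define A where "A = {a,b,c}"
  define G where "G xs = g (map leaf xs)" for xs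
  have Gtree: "is_tree (G xs)" if "xs \<in> tup n A" for xs
  proof -
    have "length (map leaf xs) = n" using that unfolding tup_def by simp
    then have "g (map leaf xs) \<in> trees" using gtree map_leaf_trees by blast
    then show ?thesis unfolding G_def trees_def by simp
  qed
  have rep: "replicate n a \<in> tup n A" unfolding tup_def A_def by auto
  define D where "D = fst ` G (replicate n a)"
  have domG: "fst ` G xs = D" if "xs \<in> tup n A" for xs
  proof -
    have "map (\<lambda>_. a) xs = map (\<lambda>_. a) (replicate n a)" using that unfolding tup_def by (simp add: map_replicate_const)
    moreover have "length xs = n" using that unfolding tup_def by simp
    ultimately have "ren (\<lambda>_. a) (G xs) = ren (\<lambda>_. a) (G (replicate n a))"
      unfolding G_def using ren_G[OF cp, of xs "replicate n a" "\<lambda>_. a"] by simp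
    then show ?thesis unfolding D_def by (metis fst_ren)
  qed
  define \<phi> where "\<phi> u xs = (THE m. (u,m) \<in> G xs)" for u xs
  have phi_uniq: "m = \<phi> u xs" if "xs \<in> tup n A" "(u,m) \<in> G xs" for u m xs
  proof -
    have "m' = m" if "(u,m') \<in> G xs" for m'
      using tree_prefix[OF Gtree[OF \<open>xs \<in> tup n A\<close>] that \<open>(u,m) \<in> G xs\<close>] by simp
    then show ?thesis unfolding \<phi>_def using \<open>(u,m) \<in> G xs\<close> by (metis (mono_tags) the_equality)
  qed
  have phi_mem: "(u, \<phi> u xs) \<in> G xs" if "xs \<in> tup n A" "u \<in> D" for u xs
  proof -
    have "u \<in> fst ` G xs" using domG that by simp
    then obtain m where "(u,m) \<in> G xs" by force
    then show ?thesis using phi_uniq that by metis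
  qed
  have memG: "(u,m) \<in> G xs \<longleftrightarrow> u \<in> D \<and> m = \<phi> u xs" if "xs \<in> tup n A" for u m xs
    using phi_uniq phi_mem domG that by (metis fst_conv image_eqI)
  have cs: "clone_setup (\<phi> u) a b c n" if "u \<in> D" for u
  proof
    show "a \<noteq> b" "a \<noteq> c" "b \<noteq> c" by (rule abc)+
  next
    fix \<rho> :: "'a \<Rightarrow> 'a" and xs ys
    assume xs: "xs \<in> tup n {a,b,c}" and ys: "ys \<in> tup n {a,b,c}" and e: "map \<rho> xs = map \<rho> ys"
    have "ren \<rho> (G xs) = ren \<rho> (G ys)"
      unfolding G_def using ren_G[OF cp _ _ e] xs ys unfolding tup_def by simp
    moreover have "(u, \<rho> (\<phi> u xs)) \<in> ren \<rho> (G xs)"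
      using phi_mem[OF xs[folded A_def] that] unfolding ren_def by force
    ultimately have "(u, \<rho> (\<phi> u xs)) \<in> ren \<rho> (G ys)" by simp
    then obtain m where "(u,m) \<in> G ys" "\<rho> m = \<rho> (\<phi> u xs)" unfolding ren_def by force
    then show "\<rho> (\<phi> u xs) = \<rho> (\<phi> u ys)" using phi_uniq[OF ys[folded A_def]] by metis
  qed
  define proj where "proj u = (\<exists>i<n. \<forall>xs\<in>tup n A. \<phi> u xs = xs!i)" for u
  define idx where "idx u = (SOME i. i<n \<and> (\<forall>xs\<in>tup n A. \<phi> u xs = xs!i))" for u
  have idx: "idx u < n" "\<forall>xs\<in>tup n A. \<phi> u xs = xs!(idx u)" if "proj u" for u
    using someI_ex[OF that[unfolded proj_def]] unfolding idx_def by auto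
  have const: "\<phi> u xs = \<phi> u (replicate n a)" if "u \<in> D" "\<not> proj u" "xs \<in> tup n A" for u xs
    using clone_setup.clone[OF cs[OF that(1)]] that(2,3) unfolding proj_def A_def by blast
  define P :: "('a + nat) tree" where
    "P = {(u, Inr (idx u)) | u. u \<in> D \<and> proj u} \<union> {(u, Inl (\<phi> u (replicate n a))) | u. u \<in> D \<and> \<not> proj u}"
  have memP: "(u,d) \<in> P \<longleftrightarrow> u \<in> D \<and> d = (if proj u then Inr (idx u) else Inl (\<phi> u (replicate n a)))" for u d
    unfolding P_def by auto
  have finD: "finite D" using Gtree[OF rep] unfolding D_def is_tree_def by simp
  have Ptree: "is_tree P"
  proof -
    have "P = (\<lambda>u. (u, if proj u then Inr (idx u) else Inl (\<phi> u (replicate n a)))) ` D"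
      using memP by auto
    then have "finite P" using finD by simp
    moreover have "u = v \<and> d = e" if "(u,d) \<in> P" "(v,e) \<in> P" "prefix u v" for u d v e
    proof -
      have "u \<in> D" "v \<in> D" using that memP by auto
      then have "(u, \<phi> u (replicate n a)) \<in> G (replicate n a)" "(v, \<phi> v (replicate n a)) \<in> G (replicate n a)"
        using phi_mem[OF rep] by auto
      then have "u = v" using tree_prefix[OF Gtree[OF rep]] that(3) by blast
      then show ?thesis using that memP by auto
    qed
    ultimately show ?thesis unfolding is_tree_alt by blast
  qed
  have Ppoly: "is_poly n P" unfolding is_poly_def using Ptree memP idx by (auto split: if_splits)
  have base: "psubst P (map leaf xs) = G xs" if xs: "xs \<in> tup n A" for xs
  proof (rule set_eqI)
    fix p :: "bool list \<times> 'a"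
    obtain x m where p: "p = (x,m)" by (cases p)
    have len: "length xs = n" using xs unfolding tup_def by simp
    have "(x,m) \<in> psubst P (map leaf xs) \<longleftrightarrow> x \<in> D \<and> m = \<phi> x xs"
    proof
      assume "(x,m) \<in> psubst P (map leaf xs)"
      then consider "(x, Inl m) \<in> P" | u w i where "x = u@w" "(u,Inr i)\<in>P" "(w,m)\<in>(map leaf xs)!i"
        unfolding mem_psubst by blast
      then show "x \<in> D \<and> m = \<phi> x xs"
      proof cases
        case 1
        then have "x \<in> D" "\<not> proj x" "m = \<phi> x (replicate n a)" using memP[of x "Inl m"] by (auto split: if_splits)
        then show ?thesis using const[OF _ _ xs] by simp
      next
        case (2 u w i)
        then have u: "u \<in> D" "proj u" "i = idx u" using memP[of u "Inr i"] by (auto split: if_splits)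
        then have "i < n" using idx by simp
        then have "w = []" "m = xs!i" using 2(3) len unfolding leaf_def by auto
        then show ?thesis using 2(1) u idx(2)[OF u(2)] xs by simp
      qed
    next
      assume h: "x \<in> D \<and> m = \<phi> x xs"
      show "(x,m) \<in> psubst P (map leaf xs)"
      proof (cases "proj x")
        case True
        then have "(x, Inr (idx x)) \<in> P" using memP h by simp
        moreover have "([], m) \<in> (map leaf xs)!(idx x)" using idx[OF True] h xs len unfolding leaf_def by simp
        ultimately show ?thesis unfolding mem_psubst by (metis append_Nil2)
      next
        case False
        then have "(x, Inl m) \<in> P" using memP h const[OF _ False xs] by simp
        then show ?thesis unfolding mem_psubst by blast
      qed
    qed
    then show "p \<in> psubst P (map leaf xs) \<longleftrightarrow> p \<in> G xs" unfolding p using memG[OF xs] by simp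
  qed
  have step: "\<forall>ts. length ts = n \<and> set ts \<subseteq> trees \<and> (\<forall>i. k \<le> i \<and> i < n \<longrightarrow> ts!i \<in> {leaf a, leaf b}) \<longrightarrow> g ts = psubst P ts"
    if "k \<le> n" for k
    using that
  proof (induction k)
    case 0
    show ?case
    proof (intro allI impI)
      fix ts :: "'a tree list"
      assume h: "length ts = n \<and> set ts \<subseteq> trees \<and> (\<forall>i. 0 \<le> i \<and> i < n \<longrightarrow> ts!i \<in> {leaf a, leaf b})"
      define xs where "xs = map (\<lambda>t. if t = leaf a then a else b) ts"
      have xs: "xs \<in> tup n A" unfolding xs_def tup_def A_def using h by auto
      have "map leaf xs = ts"
      proof (rule nth_equalityI)
        show "length (map leaf xs) = length ts" unfolding xs_def by simp
        fix i assume "i < length (map leaf xs)"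
        then have "i < n" using h unfolding xs_def by simp
        then show "map leaf xs ! i = ts ! i" using h unfolding xs_def by auto
      qed
      then show "g ts = psubst P ts" using base[OF xs] unfolding G_def by simp
    qed
  next
    case (Suc k)
    have kn: "k < n" using Suc.prems by simp
    have IH: "\<And>ts. length ts = n \<Longrightarrow> set ts \<subseteq> trees \<Longrightarrow> (\<forall>i. k \<le> i \<and> i < n \<longrightarrow> ts!i \<in> {leaf a, leaf b}) \<Longrightarrow> g ts = psubst P ts"
      using Suc.IH kn by simp
    show ?case
    proof (intro allI impI)
      fix ts :: "'a tree list"
      assume h: "length ts = n \<and> set ts \<subseteq> trees \<and> (\<forall>i. Suc k \<le> i \<and> i < n \<longrightarrow> ts!i \<in> {leaf a, leaf b})"
      then have len: "length ts = n" and tr: "set ts \<subseteq> trees" by simp_all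
      show "g ts = psubst P ts"
      proof (cases "ts!k \<in> {leaf a, leaf b}")
        case True
        have "\<forall>i. k \<le> i \<and> i < n \<longrightarrow> ts!i \<in> {leaf a, leaf b}"
        proof (intro allI impI)
          fix i assume i: "k \<le> i \<and> i < n"
          show "ts!i \<in> {leaf a, leaf b}"
          proof (cases "i = k")
            case True then show ?thesis using \<open>ts!k \<in> {leaf a, leaf b}\<close> by simp
          next
            case False then have "Suc k \<le> i" using i by simp
            then show ?thesis using h i by blast
          qed
        qed
        then show ?thesis using IH len tr by blast
      next
        case False
        define t where "t = ts!k"
        have "ts!k \<in> set ts" by (rule nth_mem) (simp add: len kn)
        then have t: "is_tree t" using tr unfolding t_def trees_def by blast
        have ta: "t \<noteq> leaf a" "t \<noteq> leaf b" using False unfolding t_def by auto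
        have eq: "tsub l (fixY l t) (g ts) = tsub l (fixY l t) (psubst P ts)" if l: "l \<in> {a,b}" for l
        proof -
          define ts' where "ts' = ts[k := leaf l]"
          have len': "length ts' = n" unfolding ts'_def using len by simp
          have "set ts' \<subseteq> insert (leaf l) (set ts)" unfolding ts'_def by (rule set_update_subset_insert)
          moreover have "leaf l \<in> trees" unfolding trees_def using leaf_tree by simp
          ultimately have tr': "set ts' \<subseteq> trees" using tr by blast
          have "\<forall>i. k \<le> i \<and> i < n \<longrightarrow> ts'!i \<in> {leaf a, leaf b}"
          proof (intro allI impI)
            fix i assume i: "k \<le> i \<and> i < n"
            show "ts'!i \<in> {leaf a, leaf b}"
            proof (cases "i = k")
              case True then show ?thesis using l len kn unfolding ts'_def by auto
            next
              case False then have "Suc k \<le> i" "ts'!i = ts!i" using i unfolding ts'_def by auto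
              then show ?thesis using h i by auto
            qed
          qed
          then have g': "g ts' = psubst P ts'" using IH len' tr' by blast
          have hi: "tsub l (fixY l t) (ts!i) = tsub l (fixY l t) (ts'!i)" if "i < n" for i
          proof (cases "i = k")
            case True
            have "ts'!i = leaf l" unfolding ts'_def using True len kn by simp
            moreover have "ts!i = t" unfolding t_def using True by simp
            ultimately show ?thesis by (simp add: fixY_fix tsub_leaf)
          next
            case False then show ?thesis unfolding ts'_def by simp
          qed
          have "tsub l (fixY l t) (g ts) = tsub l (fixY l t) (g ts')"
            using cp_apply[where h="tsub l (fixY l t)", OF cp tsub_star len len' tr tr'] hi by blast
          also have "\<dots> = tsub l (fixY l t) (psubst P ts')" using g' by simp
          also have "\<dots> = tsub l (fixY l t) (psubst P ts)"
          proof (rule tsub_psubst_eq)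
            fix u i assume "(u, Inr i) \<in> P"
            then have "i < n" using Ppoly unfolding is_poly_def by auto
            then show "tsub l (fixY l t) (ts'!i) = tsub l (fixY l t) (ts!i)" using hi by simp
          qed
          finally show ?thesis .
        qed
        have Gt: "is_tree (g ts)" using gtree len tr unfolding trees_def by blast
        have Qt: "is_tree (psubst P ts)" using psubst_tree[OF Ppoly len tr] .
        have "g ts \<subseteq> psubst P ts"
          using inj_half[OF Gt Qt abc(1) t ta eq eq] by simp
        moreover have "psubst P ts \<subseteq> g ts"
          using inj_half[OF Qt Gt abc(1) t ta eq[symmetric] eq[symmetric]] by simp
        ultimately show ?thesis by blast
      qed
    qed
  qed
  have "g ts = poly_fun P ts" if "length ts = n" "set ts \<subseteq> trees" for ts
  proof -
    have "\<forall>i. n \<le> i \<and> i < n \<longrightarrow> ts!i \<in> {leaf a, leaf b}" by auto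
    then have "g ts = psubst P ts" using step[of n] that by blast
    then show ?thesis using poly_fun_eq[OF Ptree] by simp
  qed
  then show ?thesis using Ppoly by blast
qed

end
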